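(* Let $(M,\varphi,\eta,\xi,g)$ be a Kenmotsu manifold of dimension $2n+1$ with Levi-Civita connection $\nabla$. Let $(U;x^0,x^1,\dots,x^{2n})$ be a local coordinate chart adapted to the foliation generated by $\xi$, so that $\xi=\partial/\partial x^0$ on $U$, and put $\eta_i=\eta(\partial/\partial x^i)$, $\frac{\delta}{\delta x^i}=\frac{\partial}{\partial x^i}-\eta_i\frac{\partial}{\partial x^0}$, $g_{ij}=g\big(\frac{\delta}{\delta x^i},\frac{\delta}{\delta x^j}\big)$ for $i,j=1,\dots,2n$, and let $(g^{kl})$ be the inverse matrix of $(g_{ij})$. Then on $U$: $$\nabla_{\frac{\delta}{\delta x^i}}\frac{\delta}{\delta x^j}=\Gamma_{ij}^k\frac{\delta}{\delta x^k}-g_{ij}\frac{\partial}{\partial x^0},\qquad \nabla_{\frac{\partial}{\partial x^0}}\frac{\delta}{\delta x^i}=\nabla_{\frac{\delta}{\delta x^i}}\frac{\partial}{\partial x^0}=\frac{\delta}{\delta x^i},\qquad \nabla_{\frac{\partial}{\partial x^0}}\frac{\partial}{\partial x^0}=0,$$ where $\Gamma_{ij}^k=\frac12 g^{kl}\Big\{\frac{\delta g_{lj}}{\delta x^i}+\frac{\delta g_{il}}{\delta x^j}-\frac{\delta g_{ij}}{\delta x^l}\Big\}$ (summation over repeated indices).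
   Context: An almost contact metric structure $(\varphi,\eta,\xi,g)$ on a $(2n+1)$-manifold $M$ consists of a $(1,1)$-tensor $\varphi$, a vector field $\xi$, a $1$-form $\eta$ and a Riemannian metric $g$ with $\varphi^2X=-X+\eta(X)\xi$, $\eta(\xi)=1$, $\eta\circ\varphi=0$, $\varphi\xi=0$, $g(\varphi X,\varphi Y)=g(X,Y)-\eta(X)\eta(Y)$, and $\eta(X)=g(\xi,X)$. It is a Kenmotsu manifold if $(\nabla_X\varphi)Y=g(\varphi X,Y)\xi-\eta(Y)\varphi X$ for all vector fields $X,Y$, where $\nabla$ is the Levi-Civita connection of $g$. *)

theory Defs
  imports "HOL-Analysis.Analysis"
begin

text \<open>Everything is expressed in the local coordinates of a chart: the chart domain is
identified with an open set U of real^'m (CARD('m) = 2n+1), coordinate index z plays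
the role of x^0.  Vector fields are maps U -> real^'m (components w.r.t. the coordinate
frame), a (1,1)-tensor field is a matrix-valued map, a 1-form is a covector-valued map
(pairing by the inner product), the metric is a matrix-valued map.\<close>

definition pd :: "'m::finite \<Rightarrow> (real^'m \<Rightarrow> real) \<Rightarrow> real^'m \<Rightarrow> real" where
  "pd a f p = frechet_derivative f (at p) (axis a 1)"

coinductive smooth_fun :: "(real^'m::finite) set \<Rightarrow> (real^'m \<Rightarrow> real) \<Rightarrow> bool" where
  "(\<forall>p\<in>U. f differentiable (at p)) \<Longrightarrow> (\<forall>a. smooth_fun U (pd a f)) \<Longrightarrow> smooth_fun U f"

definition smooth_field :: "(real^'m::finite) set \<Rightarrow> (real^'m \<Rightarrow> real^'m) \<Rightarrow> bool" where
  "smooth_field U Y \<longleftrightarrow> (\<forall>c. smooth_fun U (\<lambda>p. Y p $ c))"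

definition smooth_tensor :: "(real^'m::finite) set \<Rightarrow> (real^'m \<Rightarrow> real^'m^'m) \<Rightarrow> bool" where
  "smooth_tensor U T \<longleftrightarrow> (\<forall>c d. smooth_fun U (\<lambda>p. T p $ c $ d))"

definition metric :: "(real^'m::finite \<Rightarrow> real^'m^'m) \<Rightarrow> real^'m \<Rightarrow> real^'m \<Rightarrow> real^'m \<Rightarrow> real" where
  "metric g p X Y = X \<bullet> (g p *v Y)"

definition riemannian_metric :: "(real^'m::finite) set \<Rightarrow> (real^'m \<Rightarrow> real^'m^'m) \<Rightarrow> bool" where
  "riemannian_metric U g \<longleftrightarrow> smooth_tensor U g \<and>
     (\<forall>p\<in>U. transpose (g p) = g p \<and> (\<forall>X. X \<noteq> 0 \<longrightarrow> metric g p X X > 0))"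

definition christoffel :: "(real^'m::finite \<Rightarrow> real^'m^'m) \<Rightarrow> real^'m \<Rightarrow> 'm \<Rightarrow> 'm \<Rightarrow> 'm \<Rightarrow> real" where
  "christoffel g p c a b = (1/2) * (\<Sum>d\<in>UNIV. matrix_inv (g p) $ c $ d *
     (pd a (\<lambda>q. g q $ d $ b) p + pd b (\<lambda>q. g q $ a $ d) p - pd d (\<lambda>q. g q $ a $ b) p))"

definition lc_nabla :: "(real^'m::finite \<Rightarrow> real^'m^'m) \<Rightarrow> real^'m \<Rightarrow> real^'m \<Rightarrow> (real^'m \<Rightarrow> real^'m) \<Rightarrow> real^'m" where
  "lc_nabla g p X Y = (\<chi> c. (\<Sum>a\<in>UNIV. X $ a * pd a (\<lambda>q. Y q $ c) p)
      + (\<Sum>a\<in>UNIV. \<Sum>b\<in>UNIV. christoffel g p c a b * X $ a * Y p $ b))"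

definition almost_contact_metric ::
  "(real^'m::finite) set \<Rightarrow> (real^'m \<Rightarrow> real^'m^'m) \<Rightarrow> (real^'m \<Rightarrow> real^'m) \<Rightarrow> (real^'m \<Rightarrow> real^'m)
     \<Rightarrow> (real^'m \<Rightarrow> real^'m^'m) \<Rightarrow> bool" where
  "almost_contact_metric U phi xi eta g \<longleftrightarrow>
     riemannian_metric U g \<and> smooth_tensor U phi \<and> smooth_field U xi \<and> smooth_field U eta \<and>
     (\<forall>p\<in>U. \<forall>X Y.
        phi p *v (phi p *v X) = - X + (eta p \<bullet> X) *\<^sub>R xi p \<and>
        eta p \<bullet> xi p = 1 \<and>
        eta p \<bullet> (phi p *v X) = 0 \<and>
        phi p *v xi p = 0 \<and>
        metric g p (phi p *v X) (phi p *v Y) = metric g p X Y - (eta p \<bullet> X) * (eta p \<bullet> Y) \<and>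
        eta p \<bullet> X = metric g p (xi p) X)"

definition kenmotsu ::
  "(real^'m::finite) set \<Rightarrow> (real^'m \<Rightarrow> real^'m^'m) \<Rightarrow> (real^'m \<Rightarrow> real^'m) \<Rightarrow> (real^'m \<Rightarrow> real^'m)
     \<Rightarrow> (real^'m \<Rightarrow> real^'m^'m) \<Rightarrow> bool" where
  "kenmotsu U phi xi eta g \<longleftrightarrow> almost_contact_metric U phi xi eta g \<and>
     (\<forall>p\<in>U. \<forall>X Y. smooth_field U Y \<longrightarrow>
        lc_nabla g p X (\<lambda>q. phi q *v Y q) - phi p *v lc_nabla g p X Y
          = metric g p (phi p *v X) (Y p) *\<^sub>R xi p - (eta p \<bullet> Y p) *\<^sub>R (phi p *v X))"

definition delta_field :: "'m::finite \<Rightarrow> (real^'m \<Rightarrow> real^'m) \<Rightarrow> 'm \<Rightarrow> real^'m \<Rightarrow> real^'m" where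
  "delta_field z eta i p = axis i 1 - (eta p \<bullet> axis i 1) *\<^sub>R axis z 1"

definition delta_deriv :: "'m::finite \<Rightarrow> (real^'m \<Rightarrow> real^'m) \<Rightarrow> 'm \<Rightarrow> (real^'m \<Rightarrow> real) \<Rightarrow> real^'m \<Rightarrow> real" where
  "delta_deriv z eta i f p = pd i f p - (eta p \<bullet> axis i 1) * pd z f p"

definition gbar :: "'m::finite \<Rightarrow> (real^'m \<Rightarrow> real^'m) \<Rightarrow> (real^'m \<Rightarrow> real^'m^'m) \<Rightarrow> real^'m \<Rightarrow> 'm \<Rightarrow> 'm \<Rightarrow> real" where
  "gbar z eta g p i j = metric g p (delta_field z eta i p) (delta_field z eta j p)"

definition Gamma_adapted :: "'m::finite \<Rightarrow> (real^'m \<Rightarrow> real^'m) \<Rightarrow> (real^'m \<Rightarrow> real^'m^'m)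
     \<Rightarrow> (real^'m \<Rightarrow> 'm \<Rightarrow> 'm \<Rightarrow> real) \<Rightarrow> real^'m \<Rightarrow> 'm \<Rightarrow> 'm \<Rightarrow> 'm \<Rightarrow> real" where
  "Gamma_adapted z eta g ginv p i j k = (1/2) * (\<Sum>l\<in>UNIV - {z}. ginv p k l *
     (delta_deriv z eta i (\<lambda>q. gbar z eta g q l j) p
      + delta_deriv z eta j (\<lambda>q. gbar z eta g q i l) p
      - delta_deriv z eta l (\<lambda>q. gbar z eta g q i j) p))"

end

theory Submission
  imports Defs
begin

lemma pd_cong:
  assumes "open U" "p \<in> U" "\<And>q. q \<in> U \<Longrightarrow> f q = f' q"
  shows "pd a f p = pd a f' p"
proof -
  have "(\<lambda>F. (f has_derivative F) (at p)) = (\<lambda>F. (f' has_derivative F) (at p))"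
    using has_derivative_transform_within_open[OF _ assms(1,2)] assms(3)
    by (metis (no_types, lifting))
  then show ?thesis unfolding pd_def frechet_derivative_def by simp
qed

lemma pd_has:
  assumes "(f has_derivative F) (at p)" shows "pd a f p = F (axis a 1)"
  using frechet_derivative_at[OF assms] unfolding pd_def by simp

lemma pd_const[simp]: "pd a (\<lambda>q. c) p = 0"
  unfolding pd_def by simp

lemma pd_add:
  assumes "f differentiable at p" "h differentiable at p"
  shows "pd a (\<lambda>q. f q + h q) p = pd a f p + pd a h p"
  using pd_has[OF has_derivative_add[OF assms[unfolded frechet_derivative_works]]]
  unfolding pd_def by simp

lemma pd_diff:
  assumes "f differentiable at p" "h differentiable at p"
  shows "pd a (\<lambda>q. f q - h q) p = pd a f p - pd a h p"
  using pd_has[OF has_derivative_diff[OF assms[unfolded frechet_derivative_works]]]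
  unfolding pd_def by simp

lemma pd_mult:
  fixes f h :: "real^'m::finite \<Rightarrow> real"
  assumes "f differentiable at p" "h differentiable at p"
  shows "pd a (\<lambda>q. f q * h q) p = f p * pd a h p + pd a f p * h p"
  using pd_has[OF has_derivative_mult[OF assms[unfolded frechet_derivative_works]]]
  unfolding pd_def by simp

lemma pd_sum:
  fixes f :: "'i \<Rightarrow> real^'m::finite \<Rightarrow> real"
  assumes "finite S" "\<And>i. i \<in> S \<Longrightarrow> f i differentiable at p"
  shows "pd a (\<lambda>q. \<Sum>i\<in>S. f i q) p = (\<Sum>i\<in>S. pd a (f i) p)"
proof -
  have "((\<lambda>q. \<Sum>i\<in>S. f i q) has_derivative (\<lambda>v. \<Sum>i\<in>S. frechet_derivative (f i) (at p) v)) (at p)"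
    using assms by (intro has_derivative_sum) (simp add: frechet_derivative_works)
  from pd_has[OF this] show ?thesis unfolding pd_def by simp
qed

lemma smooth_fun_diff: "smooth_fun U f \<Longrightarrow> p \<in> U \<Longrightarrow> f differentiable at p"
  by (erule smooth_fun.cases) auto

lemma smooth_const: "smooth_fun U (\<lambda>q. c)"
proof -
  have "\<And>f. (\<exists>c. f = (\<lambda>q. c)) \<Longrightarrow> smooth_fun U f"
  proof (coinduction rule: smooth_fun.coinduct)
    case (smooth_fun f)
    then obtain c where "f = (\<lambda>q. c)" by auto
    moreover have "\<And>a. pd a (\<lambda>q. c) = (\<lambda>p. 0)" by (rule ext) simp
    ultimately show ?case by auto
  qed
  then show ?thesis by blast
qed

lemma smooth_field_const: "smooth_field U (\<lambda>q. v)"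
  unfolding smooth_field_def using smooth_const by blast

lemma axis1_nth: "axis i (1::real) $ j = (if j = i then 1 else 0)"
  unfolding axis_def by simp

lemma inv_ok:
  fixes G :: "real^'m::finite^'m"
  assumes "\<forall>X. X \<noteq> 0 \<longrightarrow> X \<bullet> (G *v X) > 0"
  shows "G ** matrix_inv G = mat 1 \<and> matrix_inv G ** G = mat 1"
proof -
  have "\<forall>x. G *v x = 0 \<longrightarrow> x = 0" using assms by force
  then have "\<exists>B. B ** G = mat 1" by (simp add: matrix_left_invertible_ker)
  then have "invertible G" by (simp add: invertible_left_inverse)
  then show ?thesis unfolding invertible_def matrix_inv_def by (rule someI_ex)
qed

definition Gl :: "(real^'m::finite \<Rightarrow> real^'m^'m) \<Rightarrow> real^'m \<Rightarrow> 'm \<Rightarrow> 'm \<Rightarrow> 'm \<Rightarrow> real" where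
  "Gl g p d a b = (1/2) * (pd a (\<lambda>q. g q $ d $ b) p + pd b (\<lambda>q. g q $ a $ d) p - pd d (\<lambda>q. g q $ a $ b) p)"

lemma christoffel_Gl: "christoffel g p c a b = (\<Sum>d\<in>UNIV. matrix_inv (g p) $ c $ d * Gl g p d a b)"
  unfolding christoffel_def Gl_def by (simp add: sum_distrib_left algebra_simps)

lemma tsym: "transpose M = M \<Longrightarrow> M $ a $ b = M $ b $ a"
  by (metis transpose_def vec_lambda_beta)

lemma pd_gsym:
  assumes "open U" "p \<in> U" "\<forall>q\<in>U. transpose (g q) = g q"
  shows "pd x (\<lambda>q. g q $ a $ b) p = pd x (\<lambda>q. g q $ b $ a) p"
  using assms by (intro pd_cong[of U]) (auto intro: tsym)

lemma sum3_rot: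
  "(\<Sum>c\<in>C. \<Sum>a\<in>A. \<Sum>b\<in>B. T c a b) = (\<Sum>a\<in>A. \<Sum>b\<in>B. \<Sum>c\<in>C. T c a b)"
proof -
  have "(\<Sum>c\<in>C. \<Sum>a\<in>A. \<Sum>b\<in>B. T c a b) = (\<Sum>a\<in>A. \<Sum>c\<in>C. \<Sum>b\<in>B. T c a b)"
    by (rule sum.swap)
  also have "\<dots> = (\<Sum>a\<in>A. \<Sum>b\<in>B. \<Sum>c\<in>C. T c a b)"
    by (rule sum.cong[OF refl], rule sum.swap)
  finally show ?thesis .
qed

lemma ifm:
  "(t::real) * (if P then s else 0) = (if P then t * s else 0)"
  "(if P then s else 0) * (t::real) = (if P then s * t else 0)"
  by auto

lemma lower:
  assumes "g p ** matrix_inv (g p) = mat 1"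
  shows "(\<Sum>c\<in>UNIV. g p $ e $ c * christoffel g p c a b) = Gl g p e a b"
proof -
  have "(\<Sum>c\<in>UNIV. g p $ e $ c * christoffel g p c a b)
     = (\<Sum>c\<in>UNIV. \<Sum>d\<in>UNIV. g p $ e $ c * matrix_inv (g p) $ c $ d * Gl g p d a b)"
    by (simp only: christoffel_Gl sum_distrib_left mult.assoc)
  also have "\<dots> = (\<Sum>d\<in>UNIV. \<Sum>c\<in>UNIV. g p $ e $ c * matrix_inv (g p) $ c $ d * Gl g p d a b)"
    by (rule sum.swap)
  also have "\<dots> = (\<Sum>d\<in>UNIV. (\<Sum>c\<in>UNIV. g p $ e $ c * matrix_inv (g p) $ c $ d) * Gl g p d a b)"
    by (simp only: sum_distrib_right)
  also have "\<dots> = (\<Sum>d\<in>UNIV. (if e = d then 1 else 0) * Gl g p d a b)"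
  proof -
    have "(\<Sum>c\<in>UNIV. g p $ e $ c * matrix_inv (g p) $ c $ d) = (if e = d then 1 else 0)" for d
      using arg_cong[OF assms, of "\<lambda>M. M $ e $ d"] by (simp add: matrix_matrix_mult_def mat_def)
    then show ?thesis by simp
  qed
  also have "\<dots> = Gl g p e a b" by (simp add: ifm)
  finally show ?thesis .
qed

lemma lower_nabla:
  assumes "g p ** matrix_inv (g p) = mat 1"
  shows "(g p *v lc_nabla g p X Y) $ e = (\<Sum>c\<in>UNIV. g p $ e $ c * (\<Sum>a\<in>UNIV. X $ a * pd a (\<lambda>q. Y q $ c) p))
      + (\<Sum>a\<in>UNIV. \<Sum>b\<in>UNIV. Gl g p e a b * X $ a * Y p $ b)"
proof -
  have "(g p *v lc_nabla g p X Y) $ e = (\<Sum>c\<in>UNIV. g p $ e $ c * (\<Sum>a\<in>UNIV. X $ a * pd a (\<lambda>q. Y q $ c) p))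
     + (\<Sum>c\<in>UNIV. g p $ e $ c * (\<Sum>a\<in>UNIV. \<Sum>b\<in>UNIV. christoffel g p c a b * X $ a * Y p $ b))"
  proof -
    have "(g p *v lc_nabla g p X Y) $ e = (\<Sum>c\<in>UNIV. g p $ e $ c * lc_nabla g p X Y $ c)"
      by (simp add: matrix_vector_mult_def)
    also have "\<dots> = (\<Sum>c\<in>UNIV. g p $ e $ c * ((\<Sum>a\<in>UNIV. X $ a * pd a (\<lambda>q. Y q $ c) p)
        + (\<Sum>a\<in>UNIV. \<Sum>b\<in>UNIV. christoffel g p c a b * X $ a * Y p $ b)))"
      by (simp add: lc_nabla_def)
    finally show ?thesis by (simp only: distrib_left sum.distrib)
  qed
  also have "(\<Sum>c\<in>UNIV. g p $ e $ c * (\<Sum>a\<in>UNIV. \<Sum>b\<in>UNIV. christoffel g p c a b * X $ a * Y p $ b))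
     = (\<Sum>a\<in>UNIV. \<Sum>b\<in>UNIV. (\<Sum>c\<in>UNIV. g p $ e $ c * christoffel g p c a b) * X $ a * Y p $ b)"
  proof -
    have "(\<Sum>c\<in>UNIV. g p $ e $ c * (\<Sum>a\<in>UNIV. \<Sum>b\<in>UNIV. christoffel g p c a b * X $ a * Y p $ b))
       = (\<Sum>c\<in>UNIV. \<Sum>a\<in>UNIV. \<Sum>b\<in>UNIV. g p $ e $ c * (christoffel g p c a b * X $ a * Y p $ b))"
      by (simp only: sum_distrib_left)
    also have "\<dots> = (\<Sum>a\<in>UNIV. \<Sum>b\<in>UNIV. \<Sum>c\<in>UNIV. g p $ e $ c * (christoffel g p c a b * X $ a * Y p $ b))"
      by (rule sum3_rot)
    also have "\<dots> = (\<Sum>a\<in>UNIV. \<Sum>b\<in>UNIV. (\<Sum>c\<in>UNIV. g p $ e $ c * christoffel g p c a b) * X $ a * Y p $ b)"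
      by (simp only: sum_distrib_right mult.assoc)
    finally show ?thesis .
  qed
  finally show ?thesis using lower[of g p, OF assms] by simp
qed

lemma Gl_pair:
  assumes "open U" "p \<in> U" "\<forall>q\<in>U. transpose (g q) = g q"
  shows "Gl g p d a c + Gl g p c a d = pd a (\<lambda>q. g q $ c $ d) p"
  unfolding Gl_def using pd_gsym[OF assms] by (simp add: algebra_simps)
  
lemma Gl_sym:
  assumes "open U" "p \<in> U" "\<forall>q\<in>U. transpose (g q) = g q"
  shows "Gl g p d a b = Gl g p d b a"
  unfolding Gl_def using pd_gsym[OF assms] by (simp add: algebra_simps)

lemma christoffel_sym:
  assumes "open U" "p \<in> U" "\<forall>q\<in>U. transpose (g q) = g q"
  shows "christoffel g p c a b = christoffel g p c b a"
  unfolding christoffel_Gl using Gl_sym[OF assms] by simp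

lemma metric_expand: "metric g q Y W = (\<Sum>c\<in>UNIV. \<Sum>d\<in>UNIV. Y $ c * g q $ c $ d * W $ d)"
  unfolding metric_def inner_vec_def matrix_vector_mult_def
  by (simp add: sum_distrib_left mult.assoc)

lemma metric_sym:
  assumes "transpose (g p) = g p"
  shows "metric g p V W = metric g p W V"
proof -
  have "metric g p V W = (\<Sum>c\<in>UNIV. \<Sum>d\<in>UNIV. W $ d * g p $ d $ c * V $ c)"
    unfolding metric_expand using tsym[OF assms] by (simp add: algebra_simps)
  also have "\<dots> = metric g p W V" unfolding metric_expand by (rule sum.swap)
  finally show ?thesis .
qed

lemma metric_lowered:
  assumes "transpose (g p) = g p"
  shows "metric g p V W = (\<Sum>e\<in>UNIV. (g p *v V) $ e * W $ e)"
proof -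
  have "metric g p V W = metric g p W V" by (rule metric_sym[of g p, OF assms])
  also have "\<dots> = (\<Sum>e\<in>UNIV. (g p *v V) $ e * W $ e)"
    unfolding metric_def inner_vec_def by (simp add: mult.commute)
  finally show ?thesis .
qed

lemma metric_compat:
  fixes g :: "real^'m::finite \<Rightarrow> real^'m^'m"
  assumes U: "open U" "p \<in> U" and S: "\<forall>q\<in>U. transpose (g q) = g q"
    and Dg: "\<And>c d. (\<lambda>q. g q $ c $ d) differentiable at p"
    and DY: "\<And>c. (\<lambda>q. Y q $ c) differentiable at p"
    and DW: "\<And>c. (\<lambda>q. W q $ c) differentiable at p"
    and inv: "g p ** matrix_inv (g p) = mat 1"
  shows "(\<Sum>a\<in>UNIV. X $ a * pd a (\<lambda>q. metric g q (Y q) (W q)) p)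
        = metric g p (lc_nabla g p X Y) (W p) + metric g p (Y p) (lc_nabla g p X W)"
proof -
  have Sp: "transpose (g p) = g p" using S U by auto
  have pdm: "pd a (\<lambda>q. metric g q (Y q) (W q)) p = (\<Sum>c\<in>UNIV. \<Sum>d\<in>UNIV.
       pd a (\<lambda>q. Y q $ c) p * g p $ c $ d * W p $ d + Y p $ c * pd a (\<lambda>q. g q $ c $ d) p * W p $ d
       + Y p $ c * g p $ c $ d * pd a (\<lambda>q. W q $ d) p)" for a
    unfolding metric_expand
    using DY DW Dg
    by (simp add: pd_sum pd_mult algebra_simps)
  have E1: "(\<Sum>a\<in>UNIV. X $ a * (\<Sum>c\<in>UNIV. \<Sum>d\<in>UNIV. pd a (\<lambda>q. Y q $ c) p * g p $ c $ d * W p $ d))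
      = (\<Sum>e\<in>UNIV. (\<Sum>c\<in>UNIV. g p $ e $ c * (\<Sum>a\<in>UNIV. X $ a * pd a (\<lambda>q. Y q $ c) p)) * W p $ e)"
  proof -
    have "(\<Sum>e\<in>UNIV. (\<Sum>c\<in>UNIV. g p $ e $ c * (\<Sum>a\<in>UNIV. X $ a * pd a (\<lambda>q. Y q $ c) p)) * W p $ e)
       = (\<Sum>e\<in>UNIV. \<Sum>c\<in>UNIV. \<Sum>a\<in>UNIV. X $ a * (pd a (\<lambda>q. Y q $ c) p * g p $ c $ e * W p $ e))"
      using tsym[OF Sp] by (simp add: sum_distrib_left sum_distrib_right algebra_simps)
    also have "\<dots> = (\<Sum>c\<in>UNIV. \<Sum>a\<in>UNIV. \<Sum>e\<in>UNIV. X $ a * (pd a (\<lambda>q. Y q $ c) p * g p $ c $ e * W p $ e))"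
      by (rule sum3_rot)
    also have "\<dots> = (\<Sum>a\<in>UNIV. \<Sum>c\<in>UNIV. \<Sum>e\<in>UNIV. X $ a * (pd a (\<lambda>q. Y q $ c) p * g p $ c $ e * W p $ e))"
      by (rule sum.swap)
    finally show ?thesis by (simp add: sum_distrib_left)
  qed
  have E3: "(\<Sum>a\<in>UNIV. X $ a * (\<Sum>c\<in>UNIV. \<Sum>d\<in>UNIV. Y p $ c * g p $ c $ d * pd a (\<lambda>q. W q $ d) p))
      = (\<Sum>e\<in>UNIV. (\<Sum>c\<in>UNIV. g p $ e $ c * (\<Sum>a\<in>UNIV. X $ a * pd a (\<lambda>q. W q $ c) p)) * Y p $ e)"
  proof -
    have "(\<Sum>e\<in>UNIV. (\<Sum>c\<in>UNIV. g p $ e $ c * (\<Sum>a\<in>UNIV. X $ a * pd a (\<lambda>q. W q $ c) p)) * Y p $ e)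
       = (\<Sum>e\<in>UNIV. \<Sum>c\<in>UNIV. \<Sum>a\<in>UNIV. X $ a * (Y p $ e * g p $ e $ c * pd a (\<lambda>q. W q $ c) p))"
      by (simp add: sum_distrib_left sum_distrib_right algebra_simps)
    also have "\<dots> = (\<Sum>a\<in>UNIV. \<Sum>e\<in>UNIV. \<Sum>c\<in>UNIV. X $ a * (Y p $ e * g p $ e $ c * pd a (\<lambda>q. W q $ c) p))"
      by (rule sum3_rot[symmetric])
    finally show ?thesis by (simp add: sum_distrib_left)
  qed
  have E2: "(\<Sum>a\<in>UNIV. X $ a * (\<Sum>c\<in>UNIV. \<Sum>d\<in>UNIV. Y p $ c * pd a (\<lambda>q. g q $ c $ d) p * W p $ d))
      = (\<Sum>e\<in>UNIV. (\<Sum>a\<in>UNIV. \<Sum>b\<in>UNIV. Gl g p e a b * X $ a * Y p $ b) * W p $ e)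
      + (\<Sum>e\<in>UNIV. (\<Sum>a\<in>UNIV. \<Sum>b\<in>UNIV. Gl g p e a b * X $ a * W p $ b) * Y p $ e)"
  proof -
    have r1: "(\<Sum>e\<in>UNIV. (\<Sum>a\<in>UNIV. \<Sum>b\<in>UNIV. Gl g p e a b * X $ a * Y p $ b) * W p $ e)
        = (\<Sum>a\<in>UNIV. \<Sum>c\<in>UNIV. \<Sum>d\<in>UNIV. X $ a * (Y p $ c * Gl g p d a c * W p $ d))"
    proof -
      have "(\<Sum>e\<in>UNIV. (\<Sum>a\<in>UNIV. \<Sum>b\<in>UNIV. Gl g p e a b * X $ a * Y p $ b) * W p $ e)
         = (\<Sum>d\<in>UNIV. \<Sum>a\<in>UNIV. \<Sum>c\<in>UNIV. X $ a * (Y p $ c * Gl g p d a c * W p $ d))"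
        by (simp add: sum_distrib_left sum_distrib_right algebra_simps)
      also have "\<dots> = (\<Sum>a\<in>UNIV. \<Sum>c\<in>UNIV. \<Sum>d\<in>UNIV. X $ a * (Y p $ c * Gl g p d a c * W p $ d))"
        by (rule sum3_rot)
      finally show ?thesis .
    qed
    have r2: "(\<Sum>e\<in>UNIV. (\<Sum>a\<in>UNIV. \<Sum>b\<in>UNIV. Gl g p e a b * X $ a * W p $ b) * Y p $ e)
        = (\<Sum>a\<in>UNIV. \<Sum>c\<in>UNIV. \<Sum>d\<in>UNIV. X $ a * (Y p $ c * Gl g p c a d * W p $ d))"
    proof -
      have "(\<Sum>e\<in>UNIV. (\<Sum>a\<in>UNIV. \<Sum>b\<in>UNIV. Gl g p e a b * X $ a * W p $ b) * Y p $ e)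
         = (\<Sum>c\<in>UNIV. \<Sum>a\<in>UNIV. \<Sum>d\<in>UNIV. X $ a * (Y p $ c * Gl g p c a d * W p $ d))"
        by (simp add: sum_distrib_left sum_distrib_right algebra_simps)
      also have "\<dots> = (\<Sum>a\<in>UNIV. \<Sum>c\<in>UNIV. \<Sum>d\<in>UNIV. X $ a * (Y p $ c * Gl g p c a d * W p $ d))"
        by (rule sum.swap)
      finally show ?thesis .
    qed
    have pt: "X $ a * (Y p $ c * Gl g p d a c * W p $ d) + X $ a * (Y p $ c * Gl g p c a d * W p $ d)
        = X $ a * (Y p $ c * pd a (\<lambda>q. g q $ c $ d) p * W p $ d)" for a c d
    proof -
      have "X $ a * (Y p $ c * Gl g p d a c * W p $ d) + X $ a * (Y p $ c * Gl g p c a d * W p $ d)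
         = X $ a * (Y p $ c * (Gl g p d a c + Gl g p c a d) * W p $ d)" by (simp add: algebra_simps)
      then show ?thesis unfolding Gl_pair[OF U S] .
    qed
    show ?thesis unfolding r1 r2 sum.distrib[symmetric] pt by (simp add: sum_distrib_left)
  qed
  have "(\<Sum>a\<in>UNIV. X $ a * pd a (\<lambda>q. metric g q (Y q) (W q)) p)
     = (\<Sum>a\<in>UNIV. X $ a * (\<Sum>c\<in>UNIV. \<Sum>d\<in>UNIV. pd a (\<lambda>q. Y q $ c) p * g p $ c $ d * W p $ d))
     + (\<Sum>a\<in>UNIV. X $ a * (\<Sum>c\<in>UNIV. \<Sum>d\<in>UNIV. Y p $ c * pd a (\<lambda>q. g q $ c $ d) p * W p $ d))
     + (\<Sum>a\<in>UNIV. X $ a * (\<Sum>c\<in>UNIV. \<Sum>d\<in>UNIV. Y p $ c * g p $ c $ d * pd a (\<lambda>q. W q $ d) p))"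
    unfolding pdm by (simp add: sum.distrib distrib_left)
  also have "\<dots> = metric g p (lc_nabla g p X Y) (W p) + metric g p (Y p) (lc_nabla g p X W)"
    unfolding E1 E2 E3 metric_lowered[of g p, OF Sp, of "lc_nabla g p X Y"] metric_sym[of g p, OF Sp, of "Y p"]
      metric_lowered[of g p, OF Sp, of "lc_nabla g p X W"] lower_nabla[of g p, OF inv]
    by (simp add: sum.distrib distrib_right)
  finally show ?thesis .
qed

lemma nabla_cong:
  assumes "open U" "p \<in> U" "\<forall>q\<in>U. Y q = Y' q"
  shows "lc_nabla g p X Y = lc_nabla g p X Y'"
proof -
  have "pd a (\<lambda>q. Y q $ c) p = pd a (\<lambda>q. Y' q $ c) p" for a c
    using assms by (intro pd_cong[of U]) auto
  moreover have "Y p = Y' p" using assms by auto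
  ultimately show ?thesis unfolding lc_nabla_def by simp
qed

lemma nabla_zero: "lc_nabla g p X (\<lambda>q. 0) = 0"
  unfolding lc_nabla_def by (simp add: vec_eq_iff)

lemma nabla_const_lower:
  assumes "g p ** matrix_inv (g p) = mat 1"
  shows "(g p *v lc_nabla g p X (\<lambda>q. axis b 1)) $ e = (\<Sum>a\<in>UNIV. Gl g p e a b * X $ a)"
  unfolding lower_nabla[of g p, OF assms] by (simp add: axis1_nth ifm)

lemma torsion:
  assumes "open U" "p \<in> U" "\<forall>q\<in>U. transpose (g q) = g q"
  shows "lc_nabla g p (X p) X' - lc_nabla g p (X' p) X
     = (\<chi> c. (\<Sum>a\<in>UNIV. X p $ a * pd a (\<lambda>q. X' q $ c) p) - (\<Sum>a\<in>UNIV. X' p $ a * pd a (\<lambda>q. X q $ c) p))"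
proof -
  have "(\<Sum>a\<in>UNIV. \<Sum>b\<in>UNIV. christoffel g p c a b * X p $ a * X' p $ b)
      = (\<Sum>a\<in>UNIV. \<Sum>b\<in>UNIV. christoffel g p c a b * X' p $ a * X p $ b)" for c
  proof -
    have "(\<Sum>a\<in>UNIV. \<Sum>b\<in>UNIV. christoffel g p c a b * X p $ a * X' p $ b)
       = (\<Sum>b\<in>UNIV. \<Sum>a\<in>UNIV. christoffel g p c a b * X p $ a * X' p $ b)" by (rule sum.swap)
    also have "\<dots> = (\<Sum>b\<in>UNIV. \<Sum>a\<in>UNIV. christoffel g p c b a * X' p $ b * X p $ a)"
      using christoffel_sym[OF assms] by (simp add: algebra_simps)
    finally show ?thesis .
  qed
  then show ?thesis unfolding lc_nabla_def by (simp add: vec_eq_iff)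
qed

lemma inv_cancel:
  fixes G :: "real^'m::finite^'m"
  assumes "matrix_inv G ** G = mat 1" "G *v V = G *v W"
  shows "V = W"
  by (metis assms matrix_vector_mul_assoc matrix_vector_mul_lid)

lemma delta_nth: "delta_field z eta i q $ c = (if c = i then 1 else 0) - eta q $ i * (if c = z then 1 else 0)"
  unfolding delta_field_def by (simp add: axis1_nth cart_eq_inner_axis[symmetric])

lemma pd_delta:
  assumes "(\<lambda>q. eta q $ i) differentiable at p"
  shows "pd a (\<lambda>q. delta_field z eta i q $ c) p = - pd a (\<lambda>q. eta q $ i) p * (if c = z then 1 else 0)"
  unfolding delta_nth using assms
  by (simp add: pd_diff pd_mult)

lemma delta_deriv_sum:
  "delta_deriv z eta i f p = (\<Sum>a\<in>UNIV. delta_field z eta i p $ a * pd a f p)"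
proof -
  have "(\<Sum>a\<in>UNIV. delta_field z eta i p $ a * pd a f p)
     = (\<Sum>a\<in>UNIV. (if a = i then pd a f p else 0)) - eta p $ i * (\<Sum>a\<in>UNIV. (if a = z then pd a f p else 0))"
    unfolding delta_nth by (simp add: left_diff_distrib sum_subtractf sum_distrib_left ifm mult.assoc)
  then show ?thesis unfolding delta_deriv_def by (simp add: cart_eq_inner_axis[symmetric])
qed

lemma metric_sum_right:
  "metric g p u (\<Sum>k\<in>S. c k *\<^sub>R w k) = (\<Sum>k\<in>S. c k * metric g p u (w k))"
proof (induct S rule: infinite_finite_induct)
  case (insert x F)
  then show ?case
    by (simp add: metric_def matrix_vector_right_distrib inner_add_right matrix_vector_mult_scaleR)
qed (simp_all add: metric_def)

lemma decomp:
  fixes v e :: "real^'m::finite"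
  assumes "e $ z = 1"
  shows "v = (\<Sum>k\<in>UNIV - {z}. v $ k *\<^sub>R (axis k 1 - e $ k *\<^sub>R axis z 1)) + (e \<bullet> v) *\<^sub>R axis z 1"
proof -
  have split: "(\<Sum>a\<in>UNIV. f a) = f z + (\<Sum>a\<in>UNIV - {z}. f a)" for f :: "'m \<Rightarrow> real"
    by (simp add: sum.remove)
  show ?thesis
  proof (subst vec_eq_iff, intro allI)
    fix c
    show "v $ c = ((\<Sum>k\<in>UNIV - {z}. v $ k *\<^sub>R (axis k 1 - e $ k *\<^sub>R axis z 1)) + (e \<bullet> v) *\<^sub>R axis z 1) $ c"
    proof (cases "c = z")
      case True
      then show ?thesis
        using assms by (simp add: sum_component axis1_nth inner_vec_def split[of "\<lambda>a. e $ a * v $ a"] sum_negf mult.commute)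
    next
      case False
      then show ?thesis
        by (simp add: sum_component axis1_nth if_distrib[of "\<lambda>x. _ * x"] cong: if_cong)
    qed
  qed
qed

lemma metric_axis: "metric g q (axis i 1) (axis j 1) = g q $ i $ j"
  unfolding metric_expand by (simp add: axis1_nth ifm)

lemma mv_axis: "(M *v axis a 1) $ d = (M :: real^'m::finite^'m) $ d $ a"
  unfolding matrix_vector_mult_def by (simp add: axis1_nth ifm)

lemma metric_add_right: "metric g p u (v + w) = metric g p u v + metric g p u w"
  unfolding metric_def by (simp add: matrix_vector_right_distrib inner_add_right)

lemma metric_scale_right: "metric g p u (c *\<^sub>R w) = c * metric g p u w"
  unfolding metric_def by (simp add: matrix_vector_mult_scaleR)

lemma sum_axis: "(\<Sum>a\<in>UNIV. axis z 1 $ a * F a) = (F z :: real)"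
  by (simp add: axis1_nth ifm)

theorem theorem1:
  fixes n :: nat and z :: "'m::finite" and U :: "(real^'m) set"
    and phi :: "real^'m \<Rightarrow> real^'m^'m" and xi eta :: "real^'m \<Rightarrow> real^'m"
    and g :: "real^'m \<Rightarrow> real^'m^'m" and ginv :: "real^'m \<Rightarrow> 'm \<Rightarrow> 'm \<Rightarrow> real"
  assumes dim: "CARD('m) = 2 * n + 1"
    and U_open: "open U"
    and K: "kenmotsu U phi xi eta g"
    and adapted: "\<forall>p\<in>U. xi p = axis z 1"
    and ginv: "\<forall>p\<in>U. \<forall>k\<in>UNIV - {z}. \<forall>j\<in>UNIV - {z}.
                 (\<Sum>l\<in>UNIV - {z}. ginv p k l * gbar z eta g p l j) = (if k = j then 1 else 0)
               \<and> (\<Sum>l\<in>UNIV - {z}. gbar z eta g p k l * ginv p l j) = (if k = j then 1 else 0)"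
  shows "\<forall>p\<in>U.
     (\<forall>i\<in>UNIV - {z}. \<forall>j\<in>UNIV - {z}.
        lc_nabla g p (delta_field z eta i p) (delta_field z eta j)
          = (\<Sum>k\<in>UNIV - {z}. Gamma_adapted z eta g ginv p i j k *\<^sub>R delta_field z eta k p)
            - gbar z eta g p i j *\<^sub>R axis z 1)
   \<and> (\<forall>i\<in>UNIV - {z}.
        lc_nabla g p (axis z 1) (delta_field z eta i) = delta_field z eta i p
      \<and> lc_nabla g p (delta_field z eta i p) (\<lambda>q. axis z 1) = delta_field z eta i p)
   \<and> lc_nabla g p (axis z 1) (\<lambda>q. axis z 1) = 0"
proof
  fix p assume pU: "p \<in> U"
  have AC: "almost_contact_metric U phi xi eta g" and
    KEN: "\<forall>p\<in>U. \<forall>X Y. smooth_field U Y \<longrightarrow>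
        lc_nabla g p X (\<lambda>q. phi q *v Y q) - phi p *v lc_nabla g p X Y
          = metric g p (phi p *v X) (Y p) *\<^sub>R xi p - (eta p \<bullet> Y p) *\<^sub>R (phi p *v X)"
    using K unfolding kenmotsu_def by auto
  have RM: "riemannian_metric U g" and ST: "smooth_tensor U g" and SE: "smooth_field U eta"
    and ACp: "\<forall>p\<in>U. \<forall>X Y.
        phi p *v (phi p *v X) = - X + (eta p \<bullet> X) *\<^sub>R xi p \<and>
        eta p \<bullet> xi p = 1 \<and>
        eta p \<bullet> (phi p *v X) = 0 \<and>
        phi p *v xi p = 0 \<and>
        metric g p (phi p *v X) (phi p *v Y) = metric g p X Y - (eta p \<bullet> X) * (eta p \<bullet> Y) \<and>
        eta p \<bullet> X = metric g p (xi p) X"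
    using AC unfolding almost_contact_metric_def riemannian_metric_def by blast+
  have S: "\<forall>q\<in>U. transpose (g q) = g q" and pos: "\<forall>q\<in>U. \<forall>X. X \<noteq> 0 \<longrightarrow> metric g q X X > 0"
    using RM unfolding riemannian_metric_def by auto
  have Sp: "transpose (g p) = g p" using S pU by auto
  have Dg: "\<And>c d. (\<lambda>q. g q $ c $ d) differentiable at p"
    using ST pU unfolding smooth_tensor_def by (auto intro: smooth_fun_diff)
  have De: "\<And>c. (\<lambda>q. eta q $ c) differentiable at p"
    using SE pU unfolding smooth_field_def by (auto intro: smooth_fun_diff)
  have eta_g: "eta q $ a = g q $ z $ a" if "q \<in> U" for q a
    using ACp adapted that metric_axis[of g q z a] cart_eq_inner_axis[of "eta q" a] by (metis inner_commute)
  have eta_z: "eta q $ z = 1" if "q \<in> U" for q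
    using ACp adapted that cart_eq_inner_axis[of "eta q" z] by metis
  have gzz: "g q $ z $ z = 1" if "q \<in> U" for q using eta_g eta_z that by metis
  have pd_gzz: "pd x (\<lambda>q. g q $ z $ z) p = 0" for x
    using pd_cong[OF U_open pU, of "\<lambda>q. g q $ z $ z" "\<lambda>q. 1"] gzz by simp
  have inv: "g p ** matrix_inv (g p) = mat 1" and inv2: "matrix_inv (g p) ** g p = mat 1"
    using inv_ok[of "g p"] pos pU unfolding metric_def by auto
  have etaxi: "eta p \<bullet> axis z 1 = 1" using eta_z[OF pU] cart_eq_inner_axis by metis
  have Nxi: "lc_nabla g p X (\<lambda>q. axis z 1) = X - (eta p \<bullet> X) *\<^sub>R axis z 1" for X
  proof -
    define N where "N = lc_nabla g p X (\<lambda>q. axis z 1)"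
    have k: "lc_nabla g p X (\<lambda>q. phi q *v axis z 1) - phi p *v N
          = metric g p (phi p *v X) (axis z 1) *\<^sub>R xi p - (eta p \<bullet> axis z 1) *\<^sub>R (phi p *v X)"
      using KEN pU smooth_field_const[of U "axis z 1"] unfolding N_def by auto
    have "lc_nabla g p X (\<lambda>q. phi q *v axis z 1) = lc_nabla g p X (\<lambda>q. 0)"
      using ACp adapted by (intro nabla_cong[OF U_open pU]) auto
    then have k0: "lc_nabla g p X (\<lambda>q. phi q *v axis z 1) = 0" by (simp add: nabla_zero)
    have "metric g p (phi p *v X) (axis z 1) = metric g p (axis z 1) (phi p *v X)"
      by (rule metric_sym[of g p, OF Sp])
    also have "\<dots> = 0" using ACp adapted pU by metis
    finally have m0: "metric g p (phi p *v X) (axis z 1) = 0" .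
    from k k0 m0 etaxi have "phi p *v N = phi p *v X" by simp
    then have "phi p *v (N - X) = 0" by (simp add: matrix_vector_mult_diff_distrib)
    then have "phi p *v (phi p *v (N - X)) = 0" by simp
    moreover have "phi p *v (phi p *v (N - X)) = - (N - X) + (eta p \<bullet> (N - X)) *\<^sub>R xi p"
      using ACp pU by blast
    ultimately have h: "0 = - (N - X) + (eta p \<bullet> (N - X)) *\<^sub>R axis z 1" using adapted pU by simp
    have "N - X = (N - X) + (- (N - X) + (eta p \<bullet> (N - X)) *\<^sub>R axis z 1)"
      by (subst h[symmetric]) simp
    also have "\<dots> = (eta p \<bullet> (N - X)) *\<^sub>R axis z 1" by (rule add_minus_cancel)
    finally have NX: "N - X = (eta p \<bullet> (N - X)) *\<^sub>R axis z 1" .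
    have "eta p \<bullet> N = metric g p (axis z 1) N" using ACp adapted pU by metis
    also have "\<dots> = (g p *v N) $ z" unfolding metric_def by (simp add: inner_axis')
    also have "\<dots> = (\<Sum>a\<in>UNIV. Gl g p z a z * X $ a)"
      unfolding N_def by (rule nabla_const_lower[of g p, OF inv])
    also have "\<dots> = 0"
      unfolding Gl_def pd_gzz by simp
    finally have "eta p \<bullet> N = 0" .
    with NX show ?thesis unfolding N_def[symmetric] by (simp add: inner_diff_right algebra_simps)
  qed
  have Glz: "Gl g p d a z = g p $ d $ a - eta p $ a * eta p $ d" for d a
  proof -
    have "Gl g p d a z = (g p *v lc_nabla g p (axis a 1) (\<lambda>q. axis z 1)) $ d"
      unfolding nabla_const_lower[of g p, OF inv] by (simp add: axis1_nth ifm)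
    also have "\<dots> = g p $ d $ a - eta p $ a * g p $ d $ z"
      unfolding Nxi by (simp add: matrix_vector_mult_diff_distrib matrix_vector_mult_scaleR mv_axis
          cart_eq_inner_axis[symmetric])
    also have "g p $ d $ z = eta p $ d" using eta_g[OF pU] tsym[OF Sp] by metis
    finally show ?thesis .
  qed
  have pdgs: "pd x (\<lambda>q. g q $ a $ b) p = pd x (\<lambda>q. g q $ b $ a) p" for x a b
    by (rule pd_gsym[OF U_open pU S])
  have pdeta: "pd x (\<lambda>q. eta q $ a) p = pd x (\<lambda>q. g q $ a $ z) p" for x a
  proof -
    have "pd x (\<lambda>q. eta q $ a) p = pd x (\<lambda>q. g q $ z $ a) p"
      using eta_g by (intro pd_cong[OF U_open pU]) auto
    then show ?thesis using pdgs by metis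
  qed
  have dEta: "pd a (\<lambda>q. eta q $ d) p = pd d (\<lambda>q. eta q $ a) p" for a d
  proof -
    have "Gl g p d a z - Gl g p a d z = 0" unfolding Glz using tsym[OF Sp, of d a] by simp
    then have "pd a (\<lambda>q. g q $ d $ z) p - pd d (\<lambda>q. g q $ a $ z) p = 0"
      unfolding Gl_def using pdgs[of z a d] pdgs[of a z d] pdgs[of d z a] by simp
    then show ?thesis unfolding pdeta by simp
  qed
  have zEta: "pd z (\<lambda>q. eta q $ d) p = 0" for d
  proof -
    have "pd d (\<lambda>q. eta q $ z) p = pd d (\<lambda>q. 1) p"
      using eta_z by (intro pd_cong[OF U_open pU]) auto
    then show ?thesis using dEta by simp
  qed
  have etadelta: "eta q \<bullet> delta_field z eta i q = 0" if "q \<in> U" for q i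
    unfolding delta_field_def using eta_z[OF that]
    by (simp add: inner_diff_right cart_eq_inner_axis[symmetric])
  have G4: "lc_nabla g p (axis z 1) (\<lambda>q. axis z 1) = 0"
    unfolding Nxi etaxi by simp
  have G3: "lc_nabla g p (delta_field z eta i p) (\<lambda>q. axis z 1) = delta_field z eta i p" for i
    unfolding Nxi etadelta[OF pU] by simp
  have G2: "lc_nabla g p (axis z 1) (delta_field z eta i) = delta_field z eta i p" for i
  proof -
    have "lc_nabla g p ((\<lambda>q. axis z 1) p) (delta_field z eta i) - lc_nabla g p (delta_field z eta i p) (\<lambda>q. axis z 1)
       = (\<chi> c. (\<Sum>a\<in>UNIV. axis z 1 $ a * pd a (\<lambda>q. delta_field z eta i q $ c) p)
           - (\<Sum>a\<in>UNIV. delta_field z eta i p $ a * pd a (\<lambda>q. axis z 1 $ c) p))"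
      by (rule torsion[OF U_open pU S])
    also have "\<dots> = 0"
      using zEta by (simp add: vec_eq_iff sum_axis pd_delta[OF De] sum_negf)
    finally show ?thesis unfolding G3 by simp
  qed
  define Nd where "Nd x y = lc_nabla g p (delta_field z eta x p) (delta_field z eta y)" for x y
  define m where "m u v = metric g p u v" for u v
  have msym: "m u v = m v u" for u v unfolding m_def by (rule metric_sym[of g p, OF Sp])
  have Dd: "\<And>c. (\<lambda>q. delta_field z eta y q $ c) differentiable at p" for y
    unfolding delta_nth using De by simp
  have Ndsym: "Nd x y = Nd y x" for x y
  proof -
    have "Nd x y - Nd y x
       = (\<chi> c. (\<Sum>a\<in>UNIV. delta_field z eta x p $ a * pd a (\<lambda>q. delta_field z eta y q $ c) p)
           - (\<Sum>a\<in>UNIV. delta_field z eta y p $ a * pd a (\<lambda>q. delta_field z eta x q $ c) p))"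
      unfolding Nd_def by (rule torsion[OF U_open pU S])
    also have "\<dots> = (\<chi> c. (delta_deriv z eta y (\<lambda>q. eta q $ x) p - delta_deriv z eta x (\<lambda>q. eta q $ y) p)
          * (if c = z then 1 else 0))"
      unfolding pd_delta[OF De] delta_deriv_sum
      by (simp add: vec_eq_iff sum_distrib_right algebra_simps sum_negf)
    also have "\<dots> = 0"
      unfolding delta_deriv_def zEta using dEta[of x y] by (simp add: vec_eq_iff)
    finally show ?thesis by simp
  qed
  have compat: "delta_deriv z eta x (\<lambda>q. gbar z eta g q y w) p
      = m (Nd x y) (delta_field z eta w p) + m (delta_field z eta y p) (Nd x w)" for x y w
    unfolding delta_deriv_sum gbar_def m_def Nd_def
    by (rule metric_compat[OF U_open pU S Dg Dd Dd inv])
  have koszul: "m (delta_field z eta l p) (Nd i j) = (1/2) * (delta_deriv z eta i (\<lambda>q. gbar z eta g q l j) p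
      + delta_deriv z eta j (\<lambda>q. gbar z eta g q i l) p
      - delta_deriv z eta l (\<lambda>q. gbar z eta g q i j) p)" for i j l
    unfolding compat using Ndsym[of j i] Ndsym[of l i] Ndsym[of l j]
      msym[of "Nd i j" "delta_field z eta l p"] by simp
  have eV: "eta p \<bullet> Nd i j = - gbar z eta g p i j" for i j
  proof -
    have "(\<Sum>a\<in>UNIV. delta_field z eta i p $ a * pd a (\<lambda>q. metric g q ((\<lambda>q. axis z 1) q) (delta_field z eta j q)) p)
       = metric g p (lc_nabla g p (delta_field z eta i p) (\<lambda>q. axis z 1)) (delta_field z eta j p)
         + metric g p (axis z 1) (Nd i j)"
      unfolding Nd_def by (rule metric_compat[OF U_open pU S Dg _ Dd inv]) simp
    moreover have "pd a (\<lambda>q. metric g q (axis z 1) (delta_field z eta j q)) p = pd a (\<lambda>q. 0) p" for a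
      using ACp adapted etadelta by (intro pd_cong[OF U_open pU]) metis
    ultimately have "0 = gbar z eta g p i j + metric g p (axis z 1) (Nd i j)"
      unfolding G3 gbar_def by simp
    moreover have "eta p \<bullet> Nd i j = metric g p (axis z 1) (Nd i j)" using ACp adapted pU by metis
    ultimately show ?thesis by simp
  qed
  have G1: "lc_nabla g p (delta_field z eta i p) (delta_field z eta j)
          = (\<Sum>k\<in>UNIV - {z}. Gamma_adapted z eta g ginv p i j k *\<^sub>R delta_field z eta k p)
            - gbar z eta g p i j *\<^sub>R axis z 1" if ij: "i \<in> UNIV - {z}" "j \<in> UNIV - {z}" for i j
  proof -
    define V where "V = Nd i j"
    have dfe: "delta_field z eta k p = axis k 1 - eta p $ k *\<^sub>R axis z 1" for k
      unfolding delta_field_def by (simp add: cart_eq_inner_axis[symmetric])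
    have dec: "V = (\<Sum>k\<in>UNIV - {z}. V $ k *\<^sub>R delta_field z eta k p) + (eta p \<bullet> V) *\<^sub>R axis z 1"
      unfolding dfe by (rule decomp[OF eta_z[OF pU]])
    have mz: "m (delta_field z eta l p) (axis z 1) = 0" for l
    proof -
      have "m (delta_field z eta l p) (axis z 1) = m (axis z 1) (delta_field z eta l p)" by (rule msym)
      also have "\<dots> = eta p \<bullet> delta_field z eta l p" unfolding m_def using ACp adapted pU by metis
      also have "\<dots> = 0" by (rule etadelta[OF pU])
      finally show ?thesis .
    qed
    have mdl: "m (delta_field z eta l p) V = (\<Sum>k\<in>UNIV - {z}. gbar z eta g p l k * V $ k)" for l
    proof -
      have "m (delta_field z eta l p) V = m (delta_field z eta l p) (\<Sum>k\<in>UNIV - {z}. V $ k *\<^sub>R delta_field z eta k p)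
          + (eta p \<bullet> V) * m (delta_field z eta l p) (axis z 1)"
        by (subst dec) (simp add: m_def metric_add_right metric_scale_right)
      also have "\<dots> = (\<Sum>k\<in>UNIV - {z}. gbar z eta g p l k * V $ k)"
        using mz unfolding m_def metric_sum_right gbar_def by (simp add: mult.commute)
      finally show ?thesis .
    qed
    have coef: "Gamma_adapted z eta g ginv p i j k = V $ k" if k: "k \<in> UNIV - {z}" for k
    proof -
      have "Gamma_adapted z eta g ginv p i j k = (\<Sum>l\<in>UNIV - {z}. ginv p k l * m (delta_field z eta l p) V)"
        unfolding Gamma_adapted_def V_def koszul by (simp add: sum_distrib_left algebra_simps)
      also have "\<dots> = (\<Sum>l\<in>UNIV - {z}. \<Sum>k'\<in>UNIV - {z}. ginv p k l * gbar z eta g p l k' * V $ k')"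
        unfolding mdl by (simp add: sum_distrib_left mult.assoc)
      also have "\<dots> = (\<Sum>k'\<in>UNIV - {z}. \<Sum>l\<in>UNIV - {z}. ginv p k l * gbar z eta g p l k' * V $ k')"
        by (rule sum.swap)
      also have "\<dots> = (\<Sum>k'\<in>UNIV - {z}. (\<Sum>l\<in>UNIV - {z}. ginv p k l * gbar z eta g p l k') * V $ k')"
        by (simp only: sum_distrib_right)
      also have "\<dots> = (\<Sum>k'\<in>UNIV - {z}. (if k = k' then 1 else 0) * V $ k')"
        using ginv pU k by (intro sum.cong refl) auto
      also have "\<dots> = V $ k" using k by (simp add: ifm)
      finally show ?thesis .
    qed
    have "(\<Sum>k\<in>UNIV - {z}. Gamma_adapted z eta g ginv p i j k *\<^sub>R delta_field z eta k p)
            - gbar z eta g p i j *\<^sub>R axis z 1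
        = (\<Sum>k\<in>UNIV - {z}. V $ k *\<^sub>R delta_field z eta k p) + (eta p \<bullet> V) *\<^sub>R axis z 1"
      using coef eV[of i j] unfolding V_def by simp
    also have "\<dots> = V" using dec by simp
    finally show ?thesis unfolding V_def Nd_def by simp
  qed
  show "(\<forall>i\<in>UNIV - {z}. \<forall>j\<in>UNIV - {z}.
        lc_nabla g p (delta_field z eta i p) (delta_field z eta j)
          = (\<Sum>k\<in>UNIV - {z}. Gamma_adapted z eta g ginv p i j k *\<^sub>R delta_field z eta k p)
            - gbar z eta g p i j *\<^sub>R axis z 1)
   \<and> (\<forall>i\<in>UNIV - {z}.
        lc_nabla g p (axis z 1) (delta_field z eta i) = delta_field z eta i p
      \<and> lc_nabla g p (delta_field z eta i p) (\<lambda>q. axis z 1) = delta_field z eta i p)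
   \<and> lc_nabla g p (axis z 1) (\<lambda>q. axis z 1) = 0"
    using G1 G2 G3 G4 by blast
qed

end
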